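(* Let $T\ge2$, let $n\ge2T^2$ be an integer, and $N=\frac{\sqrt{2n+1}+\sqrt{2n+3}}{2}$. Then for all $x,y\in[-T,T]$, $$k_n(x,y)=\frac1\pi\frac{\sin N(x-y)}{x-y}+R_n(x,y)\qquad\text{with}\qquad |R_n(x,y)|\le\frac{17T^2}{\sqrt{2n+1}},$$ where for $x=y$ the first term is interpreted as $N/\pi$.
   Context: For an integer $n\ge0$, $H_n(x)=(-1)^n e^{x^2}\frac{d^n}{dx^n}e^{-x^2}$ is the $n$-th Hermite polynomial and $h_n(x)=\frac{1}{\pi^{1/4}\sqrt{2^n n!}}H_n(x)e^{-x^2/2}$ is the $n$-th Hermite function; $(h_n)_{n\ge0}$ is an orthonormal basis of $L^2(\mathbb R)$. The kernel $k_n(x,y)=\sum_{k=0}^n h_k(x)h_k(y)$ is the kernel of the orthogonal projection of $L^2(\mathbb R)$ onto $\mathrm{span}(h_0,\dots,h_n)$. *)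

theory Defs
  imports "HOL-Analysis.Analysis"
begin

definition hermite_poly :: "nat \<Rightarrow> real \<Rightarrow> real" where
  "hermite_poly n x = (-1) ^ n * exp (x\<^sup>2) * ((deriv ^^ n) (\<lambda>t. exp (- t\<^sup>2)) x)"

definition hermite_fun :: "nat \<Rightarrow> real \<Rightarrow> real" where
  "hermite_fun n x = hermite_poly n x * exp (- x\<^sup>2 / 2) / (pi powr (1/4) * sqrt (2 ^ n * fact n))"

definition hermite_kernel :: "nat \<Rightarrow> real \<Rightarrow> real \<Rightarrow> real" where
  "hermite_kernel n x y = (\<Sum>k\<le>n. hermite_fun k x * hermite_fun k y)"

definition sine_kernel :: "real \<Rightarrow> real \<Rightarrow> real \<Rightarrow> real" where
  "sine_kernel N x y = (if x = y then N / pi else sin (N * (x - y)) / (pi * (x - y)))"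

end

theory Submission
  imports Defs
begin


fun HP :: "nat \<Rightarrow> real \<Rightarrow> real" where
  "HP 0 x = 1"
| "HP (Suc 0) x = 2 * x"
| "HP (Suc (Suc n)) x = 2 * x * HP (Suc n) x - 2 * real (Suc n) * HP n x"

definition HPd :: "nat \<Rightarrow> real \<Rightarrow> real" where
  "HPd n x = 2 * real n * HP (n - 1) x"

lemma HP_rec: "HP (Suc n) x = 2 * x * HP n x - HPd n x"
  by (cases n) (auto simp: HPd_def)

lemma HP_deriv_aux: "(HP n has_real_derivative HPd n x) (at x) \<and> (HP (Suc n) has_real_derivative HPd (Suc n) x) (at x)"
proof (induction n arbitrary: x)
  case 0
  show ?case by (auto simp: HPd_def intro!: derivative_eq_intros)
next
  case (Suc n)
  have d1: "(HP (Suc n) has_real_derivative HPd (Suc n) t) (at t)" for t using Suc by blast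
  have d0: "(HP n has_real_derivative HPd n t) (at t)" for t using Suc by blast
  have e: "HP (Suc (Suc n)) = (\<lambda>t. 2 * t * HP (Suc n) t - 2 * real (Suc n) * HP n t)"
    by (rule ext) simp
  have "(HP (Suc (Suc n)) has_real_derivative
          2 * HP (Suc n) x + 2 * x * HPd (Suc n) x - 2 * real (Suc n) * HPd n x) (at x)"
    unfolding e by (auto intro!: derivative_eq_intros d0 d1)
  moreover have "2 * HP (Suc n) x + 2 * x * HPd (Suc n) x - 2 * real (Suc n) * HPd n x = HPd (Suc (Suc n)) x"
  proof (cases n)
    case 0 then show ?thesis by (simp add: HPd_def)
  next
    case (Suc m)
    then show ?thesis by (simp add: HPd_def algebra_simps)
  qed
  ultimately have "(HP (Suc (Suc n)) has_real_derivative HPd (Suc (Suc n)) x) (at x)"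
    by (simp only:)
  then show ?case using d1 by blast
qed

lemma HP_deriv: "(HP n has_real_derivative HPd n x) (at x)"
  using HP_deriv_aux by blast

lemma rodrigues: "(deriv ^^ n) (\<lambda>t. exp (- t\<^sup>2)) = (\<lambda>x. (-1) ^ n * HP n x * exp (- x\<^sup>2))"
proof (induction n)
  case 0 then show ?case by simp
next
  case (Suc n)
  have "((\<lambda>x. (-1) ^ n * HP n x * exp (- x\<^sup>2)) has_real_derivative
          (-1) ^ Suc n * HP (Suc n) x * exp (- x\<^sup>2)) (at x)" for x
    by (rule derivative_eq_intros HP_deriv refl | simp add: HP_rec algebra_simps)+
  then show ?case using Suc by (auto intro!: ext DERIV_imp_deriv)
qed

lemma hermite_poly_HP: "hermite_poly n x = HP n x"
proof -
  have a: "(-1::real)^n * (-1)^n = 1" by (simp flip: power_add)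
  have b: "exp (x\<^sup>2) * exp (- x\<^sup>2) = 1" by (simp flip: exp_add)
  have "hermite_poly n x = ((-1)^n * (-1)^n) * (exp (x\<^sup>2) * exp (- x\<^sup>2)) * HP n x"
    by (simp add: hermite_poly_def rodrigues algebra_simps)
  then show ?thesis using a b by simp
qed



definition cn :: "nat \<Rightarrow> real" where
  "cn n = pi powr (1/4) * sqrt (2 ^ n * fact n)"

definition sc :: "nat \<Rightarrow> real" where
  "sc n = sqrt ((real n + 1) / 2)"

lemma sc_pos: "sc n > 0" by (simp add: sc_def)
lemma sc_sq: "(sc n)\<^sup>2 = (real n + 1) / 2" by (simp add: sc_def)

lemma cn_pos: "cn n > 0" by (simp add: cn_def)

lemma cn_Suc: "cn (Suc n) = 2 * sc n * cn n"
proof -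
  have "sqrt (2 ^ Suc n * fact (Suc n)) = sqrt (4 * ((real n + 1) / 2)) * sqrt (2 ^ n * fact n)"
    by (simp add: real_sqrt_mult[symmetric] algebra_simps)
  also have "sqrt (4 * ((real n + 1) / 2)) = 2 * sc n"
    by (subst real_sqrt_mult) (simp add: sc_def)
  finally show ?thesis by (simp add: cn_def)
qed

lemma hf_eq: "hermite_fun n x = HP n x * exp (- x\<^sup>2 / 2) / cn n"
  by (simp add: hermite_fun_def hermite_poly_HP cn_def)

lemma hf_base: "sc 0 * hermite_fun 1 x = x * hermite_fun 0 x"
proof -
  have "cn 1 = 2 * sc 0 * cn 0" using cn_Suc[of 0] by simp
  then show ?thesis using sc_pos[of 0] cn_pos[of 0]
    by (simp add: hf_eq field_simps)
qed

lemma hf_rec: "sc (Suc n) * hermite_fun (Suc (Suc n)) x = x * hermite_fun (Suc n) x - sc n * hermite_fun n x"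
proof -
  have c1: "cn (Suc n) = 2 * sc n * cn n" by (rule cn_Suc)
  have c2: "cn (Suc (Suc n)) = 2 * sc (Suc n) * (2 * sc n * cn n)" using cn_Suc[of "Suc n"] c1 by simp
  have s: "real n + 1 = 2 * (sc n)\<^sup>2" using sc_sq[of n] by simp
  have p1: "sc n > 0" "sc (Suc n) > 0" "cn n > 0" using sc_pos cn_pos by auto
  have rs: "real (Suc n) = 2 * (sc n)\<^sup>2" using sc_sq[of n] by simp
  show ?thesis
    unfolding hf_eq c1 c2 HP.simps rs
    using p1 by (simp add: field_simps power2_eq_square)
qed

lemma hf_deriv: "(hermite_fun n has_real_derivative (x * hermite_fun n x - 2 * sc n * hermite_fun (Suc n) x)) (at x)"
proof -
  have e: "hermite_fun n = (\<lambda>t. HP n t * exp (- t\<^sup>2 / 2) / cn n)" by (rule ext) (simp add: hf_eq)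
  have "((\<lambda>t. HP n t * exp (- t\<^sup>2 / 2)) has_real_derivative (HPd n x * exp (- x\<^sup>2 / 2) + HP n x * (exp (- x\<^sup>2 / 2) * (- x)))) (at x)"
    by (auto intro!: derivative_eq_intros HP_deriv simp: power2_eq_square)
  then have "(hermite_fun n has_real_derivative (HPd n x * exp (- x\<^sup>2 / 2) + HP n x * (exp (- x\<^sup>2 / 2) * (- x))) / cn n) (at x)"
    unfolding e by (rule DERIV_cdivide)
  moreover have "(HPd n x * exp (- x\<^sup>2 / 2) + HP n x * (exp (- x\<^sup>2 / 2) * (- x))) / cn n
      = x * hermite_fun n x - 2 * sc n * hermite_fun (Suc n) x"
    using cn_pos[of n] sc_pos[of n]
    by (simp add: hf_eq cn_Suc HP_rec field_simps)
  ultimately show ?thesis by simp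
qed

definition hdf :: "nat \<Rightarrow> real \<Rightarrow> real" where
  "hdf n x = x * hermite_fun n x - 2 * sc n * hermite_fun (Suc n) x"

lemma hdf_deriv: "(hdf n has_real_derivative ((x\<^sup>2 - (2 * real n + 1)) * hermite_fun n x)) (at x)"
proof -
  have e: "hdf n = (\<lambda>t. t * hermite_fun n t - 2 * sc n * hermite_fun (Suc n) t)" by (rule ext) (simp add: hdf_def)
  have "(hdf n has_real_derivative (hermite_fun n x + x * (x * hermite_fun n x - 2 * sc n * hermite_fun (Suc n) x)
       - 2 * sc n * (x * hermite_fun (Suc n) x - 2 * sc (Suc n) * hermite_fun (Suc (Suc n)) x))) (at x)"
    unfolding e by (rule derivative_eq_intros hf_deriv refl | simp)+
  moreover have "hermite_fun n x + x * (x * hermite_fun n x - 2 * sc n * hermite_fun (Suc n) x)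
       - 2 * sc n * (x * hermite_fun (Suc n) x - 2 * sc (Suc n) * hermite_fun (Suc (Suc n)) x)
       = (x\<^sup>2 - (2 * real n + 1)) * hermite_fun n x"
  proof -
    have r: "sc (Suc n) * hermite_fun (Suc (Suc n)) x = x * hermite_fun (Suc n) x - sc n * hermite_fun n x"
      by (rule hf_rec)
    have s: "(sc n)\<^sup>2 = (real n + 1) / 2" by (rule sc_sq)
    have "hermite_fun n x + x * (x * hermite_fun n x - 2 * sc n * hermite_fun (Suc n) x)
       - 2 * sc n * (x * hermite_fun (Suc n) x - 2 * (sc (Suc n) * hermite_fun (Suc (Suc n)) x))
       = hermite_fun n x + x\<^sup>2 * hermite_fun n x - 4 * (sc n)\<^sup>2 * hermite_fun n x"
      unfolding r by (simp add: algebra_simps power2_eq_square)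
    then show ?thesis unfolding s by (simp add: field_simps)
  qed
  ultimately show ?thesis by (simp add: hf_deriv)
qed

lemma hf_deriv': "(hermite_fun n has_real_derivative hdf n x) (at x)"
  using hf_deriv by (simp add: hdf_def)

lemma CD: "(x - y) * hermite_kernel n x y
   = sc n * (hermite_fun (Suc n) x * hermite_fun n y - hermite_fun n x * hermite_fun (Suc n) y)"
proof (induction n)
  case 0
  have a: "sc 0 * hermite_fun 1 x = x * hermite_fun 0 x" "sc 0 * hermite_fun 1 y = y * hermite_fun 0 y"
    by (rule hf_base)+
  have "sc 0 * (hermite_fun 1 x * hermite_fun 0 y - hermite_fun 0 x * hermite_fun 1 y)
      = (sc 0 * hermite_fun 1 x) * hermite_fun 0 y - hermite_fun 0 x * (sc 0 * hermite_fun 1 y)"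
    by (simp add: algebra_simps)
  then show ?case unfolding a by (simp add: hermite_kernel_def algebra_simps)
next
  case (Suc n)
  have a: "sc (Suc n) * hermite_fun (Suc (Suc n)) x = x * hermite_fun (Suc n) x - sc n * hermite_fun n x"
          "sc (Suc n) * hermite_fun (Suc (Suc n)) y = y * hermite_fun (Suc n) y - sc n * hermite_fun n y"
    by (rule hf_rec)+
  have "sc (Suc n) * (hermite_fun (Suc (Suc n)) x * hermite_fun (Suc n) y - hermite_fun (Suc n) x * hermite_fun (Suc (Suc n)) y)
    = (sc (Suc n) * hermite_fun (Suc (Suc n)) x) * hermite_fun (Suc n) y - hermite_fun (Suc n) x * (sc (Suc n) * hermite_fun (Suc (Suc n)) y)"
    by (simp add: algebra_simps)
  also have "\<dots> = (x - y) * hermite_fun (Suc n) x * hermite_fun (Suc n) y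
     + sc n * (hermite_fun (Suc n) x * hermite_fun n y - hermite_fun n x * hermite_fun (Suc n) y)"
    unfolding a by (simp add: algebra_simps)
  also have "\<dots> = (x - y) * hermite_kernel (Suc n) x y"
    using Suc by (simp add: hermite_kernel_def algebra_simps)
  finally show ?case by simp
qed



definition Ef :: "(real \<Rightarrow> real) \<Rightarrow> (real \<Rightarrow> real) \<Rightarrow> real \<Rightarrow> real \<Rightarrow> real" where
  "Ef f g L t = (g t)\<^sup>2 + (L\<^sup>2 - t\<^sup>2) * (f t)\<^sup>2"

lemma mvt_bound:
  fixes \<phi> \<phi>' :: "real \<Rightarrow> real"
  assumes "\<And>t. min x y \<le> t \<Longrightarrow> t \<le> max x y \<Longrightarrow> (\<phi> has_real_derivative \<phi>' t) (at t)"
    and "\<And>t. min x y \<le> t \<Longrightarrow> t \<le> max x y \<Longrightarrow> \<bar>\<phi>' t\<bar> \<le> B"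
  shows "\<bar>\<phi> y - \<phi> x\<bar> \<le> B * \<bar>y - x\<bar>"
proof (cases "x < y")
  case True
  obtain z where z: "x < z" "z < y" "\<phi> y - \<phi> x = (y - x) * \<phi>' z"
    using MVT2[OF True, of \<phi> \<phi>'] assms(1) True by force
  have "\<bar>\<phi>' z\<bar> \<le> B" using assms(2) z by auto
  then show ?thesis using z True by (simp add: abs_mult mult.commute mult_right_mono)
next
  case False
  show ?thesis
  proof (cases "y < x")
    case True
    obtain z where z: "y < z" "z < x" "\<phi> x - \<phi> y = (x - y) * \<phi>' z"
      using MVT2[OF True, of \<phi> \<phi>'] assms(1) True by force
    have "\<bar>\<phi>' z\<bar> \<le> B" using assms(2) z by auto
    then show ?thesis using z True by (simp add: abs_mult abs_minus_commute mult.commute mult_right_mono)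
  next
    case False
    then show ?thesis using \<open>\<not> x < y\<close> by simp
  qed
qed

lemma sin_lip: fixes a b :: real shows "\<bar>sin a - sin b\<bar> \<le> \<bar>a - b\<bar>"
proof -
  have "\<bar>sin a - sin b\<bar> \<le> 1 * \<bar>a - b\<bar>"
    by (rule mvt_bound[of b a sin cos]) (auto intro!: derivative_eq_intros)
  then show ?thesis by simp
qed

lemma sq_le: "\<bar>t\<bar> \<le> T \<Longrightarrow> t\<^sup>2 \<le> (T::real)\<^sup>2"
proof -
  assume a: "\<bar>t\<bar> \<le> T"
  have "\<bar>t\<bar>\<^sup>2 \<le> T\<^sup>2" by (rule power_mono[OF a]) simp
  then show ?thesis by simp
qed

context
  fixes f g :: "real \<Rightarrow> real" and L :: real
  assumes df: "\<And>t. (f has_real_derivative g t) (at t)"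
    and dg: "\<And>t. (g has_real_derivative (t\<^sup>2 - L\<^sup>2) * f t) (at t)"
begin

lemma Ef_deriv: "(Ef f g L has_real_derivative (- 2 * t * (f t)\<^sup>2)) (at t)"
proof -
  have e: "Ef f g L = (\<lambda>t. (g t)\<^sup>2 + (L\<^sup>2 - t\<^sup>2) * (f t)\<^sup>2)" by (rule ext) (simp add: Ef_def)
  show ?thesis unfolding e
    by (rule derivative_eq_intros df dg refl | simp add: power2_eq_square algebra_simps)+
qed

lemma Ef_le: "Ef f g L t \<le> Ef f g L 0"
proof (cases "t = 0")
  case True then show ?thesis by simp
next
  case False
  show ?thesis
  proof (cases "t > 0")
    case True
    obtain z where z: "0 < z" "z < t" "Ef f g L t - Ef f g L 0 = (t - 0) * (- 2 * z * (f z)\<^sup>2)"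
      using MVT2[OF True, of "Ef f g L" "\<lambda>t. - 2 * t * (f t)\<^sup>2"] Ef_deriv by blast
    have "(t - 0) * (- 2 * z * (f z)\<^sup>2) \<le> 0" using z True
      by (simp add: mult_nonneg_nonpos mult_nonneg_nonneg)
    then show ?thesis using z by linarith
  next
    case False
    then have tn: "t < 0" using \<open>t \<noteq> 0\<close> by simp
    obtain z where z: "t < z" "z < 0" "Ef f g L 0 - Ef f g L t = (0 - t) * (- 2 * z * (f z)\<^sup>2)"
      using MVT2[OF tn, of "Ef f g L" "\<lambda>t. - 2 * t * (f t)\<^sup>2"] Ef_deriv by blast
    have "0 \<le> (- 2 * z) * (f z)\<^sup>2" using z(2) by (simp add: zero_le_mult_iff mult_le_0_iff)
    then have "(0 - t) * (- 2 * z * (f z)\<^sup>2) \<ge> 0" using tn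
      by (metis diff_0 minus_mult_left mult_nonneg_nonneg neg_0_le_iff_le order_less_le)
    then show ?thesis using z by linarith
  qed
qed

lemma Ef_ge:
  assumes "t\<^sup>2 < L\<^sup>2"
  shows "Ef f g L 0 * (L\<^sup>2 - t\<^sup>2) \<le> Ef f g L t * L\<^sup>2"
proof -
  define G where "G s = Ef f g L s / (L\<^sup>2 - s\<^sup>2)" for s
  have Gd: "(G has_real_derivative (2 * s * (g s)\<^sup>2 / (L\<^sup>2 - s\<^sup>2)\<^sup>2)) (at s)" if "s\<^sup>2 < L\<^sup>2" for s
  proof -
    have ne: "L\<^sup>2 - s\<^sup>2 \<noteq> 0" using that by simp
    have e: "G = (\<lambda>s. Ef f g L s / (L\<^sup>2 - s\<^sup>2))" by (rule ext) (simp add: G_def)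
    have "(G has_real_derivative ((- 2 * s * (f s)\<^sup>2) * (L\<^sup>2 - s\<^sup>2) - Ef f g L s * (- (2 * s))) / (L\<^sup>2 - s\<^sup>2)\<^sup>2) (at s)"
      unfolding e
      by (rule derivative_eq_intros Ef_deriv refl | use ne in \<open>simp add: power2_eq_square\<close>)+
    moreover have "((- 2 * s * (f s)\<^sup>2) * (L\<^sup>2 - s\<^sup>2) - Ef f g L s * (- (2 * s))) = 2 * s * (g s)\<^sup>2"
      by (simp add: Ef_def algebra_simps)
    ultimately show ?thesis by simp
  qed
  have mono: "\<And>z. \<bar>z\<bar> \<le> \<bar>t\<bar> \<Longrightarrow> z\<^sup>2 < L\<^sup>2"
    using assms by (meson abs_le_square_iff le_less_trans)
  have "G 0 \<le> G t"
  proof (cases "t = 0")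
    case True then show ?thesis by simp
  next
    case False
    show ?thesis
    proof (cases "t > 0")
      case True
      obtain z where z: "0 < z" "z < t" "G t - G 0 = (t - 0) * (2 * z * (g z)\<^sup>2 / (L\<^sup>2 - z\<^sup>2)\<^sup>2)"
        using MVT2[OF True, of G "\<lambda>s. 2 * s * (g s)\<^sup>2 / (L\<^sup>2 - s\<^sup>2)\<^sup>2"] Gd mono True by force
      have "(t - 0) * (2 * z * (g z)\<^sup>2 / (L\<^sup>2 - z\<^sup>2)\<^sup>2) \<ge> 0" using z True by simp
      then show ?thesis using z by linarith
    next
      case False
      then have tn: "t < 0" using \<open>t \<noteq> 0\<close> by simp
      obtain z where z: "t < z" "z < 0" "G 0 - G t = (0 - t) * (2 * z * (g z)\<^sup>2 / (L\<^sup>2 - z\<^sup>2)\<^sup>2)"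
        using MVT2[OF tn, of G "\<lambda>s. 2 * s * (g s)\<^sup>2 / (L\<^sup>2 - s\<^sup>2)\<^sup>2"] Gd mono tn by force
      have "(2 * z) * (g z)\<^sup>2 \<le> 0" using z(2) by (simp add: mult_le_0_iff)
      then have "2 * z * (g z)\<^sup>2 / (L\<^sup>2 - z\<^sup>2)\<^sup>2 \<le> 0" by (intro divide_nonpos_nonneg) auto
      then have "(0 - t) * (2 * z * (g z)\<^sup>2 / (L\<^sup>2 - z\<^sup>2)\<^sup>2) \<le> 0" using tn
        by (metis diff_0 mult_nonneg_nonpos neg_0_le_iff_le order_less_le)
      then show ?thesis using z by linarith
    qed
  qed
  moreover have "L\<^sup>2 > 0" using assms by (smt (verit) zero_le_power2)
  ultimately show ?thesis using assms unfolding G_def by (simp add: field_simps)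
qed


lemma f_bounds:
  assumes TL: "4 * T\<^sup>2 \<le> L\<^sup>2" and L0: "L > 0" and t: "\<bar>t\<bar> \<le> T"
  shows "(f t)\<^sup>2 \<le> 4/3 * Ef f g L 0 / L\<^sup>2"
    and "(g t)\<^sup>2 \<le> Ef f g L 0"
    and "\<bar>Ef f g L t - Ef f g L 0\<bar> \<le> Ef f g L 0 * T\<^sup>2 / L\<^sup>2"
proof -
  have tT: "t\<^sup>2 \<le> T\<^sup>2" using t by (rule sq_le)
  have L2: "L\<^sup>2 > 0" using L0 by simp
  have q: "L\<^sup>2 - t\<^sup>2 \<ge> 3/4 * L\<^sup>2" using tT TL by simp
  have E: "Ef f g L t \<le> Ef f g L 0" by (rule Ef_le)
  have "(L\<^sup>2 - t\<^sup>2) * (f t)\<^sup>2 \<le> Ef f g L t" by (simp add: Ef_def)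
  moreover have "3/4 * L\<^sup>2 * (f t)\<^sup>2 \<le> (L\<^sup>2 - t\<^sup>2) * (f t)\<^sup>2" using mult_right_mono[OF q, of "(f t)\<^sup>2"] by simp
  ultimately have "3/4 * L\<^sup>2 * (f t)\<^sup>2 \<le> Ef f g L 0" using E by linarith
  then show "(f t)\<^sup>2 \<le> 4/3 * Ef f g L 0 / L\<^sup>2" using L2 by (simp add: field_simps)
  have "L\<^sup>2 - t\<^sup>2 \<ge> 0" using q L2 by linarith
  then have "(L\<^sup>2 - t\<^sup>2) * (f t)\<^sup>2 \<ge> 0" by simp
  then show "(g t)\<^sup>2 \<le> Ef f g L 0" using E by (simp add: Ef_def)
  have lt: "t\<^sup>2 < L\<^sup>2" using q L2 by linarith
  have G: "Ef f g L 0 * (L\<^sup>2 - t\<^sup>2) \<le> Ef f g L t * L\<^sup>2" by (rule Ef_ge[OF lt])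
  have E0: "Ef f g L 0 \<ge> 0" by (simp add: Ef_def)
  have "Ef f g L 0 - Ef f g L t \<le> Ef f g L 0 * t\<^sup>2 / L\<^sup>2"
    using G L2 by (simp add: field_simps)
  also have "\<dots> \<le> Ef f g L 0 * T\<^sup>2 / L\<^sup>2"
    using tT E0 L2 by (simp add: divide_right_mono mult_left_mono)
  finally show "\<bar>Ef f g L t - Ef f g L 0\<bar> \<le> Ef f g L 0 * T\<^sup>2 / L\<^sup>2" using E by simp
qed

lemma decomp_alg:
  fixes M d W A S R F SN :: real
  assumes "M \<noteq> 0" "d \<noteq> 0" "M * W = A * S + R"
  shows "F / 2 + W / (2 * d) - SN / (pi * d) = F / 2 + (A / M - 2 / pi) * (S / (2 * d)) + 2 / pi * (S - SN) / (2 * d) + R / (2 * M * d)"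
proof -
  have W: "W = (A * S + R) / M" using assms(1,3) by (simp add: field_simps)
  show ?thesis unfolding W using assms(1,2) by (simp add: field_simps)
qed

lemma abs_comb: "\<bar>s\<bar> \<le> 1 \<Longrightarrow> \<bar>c\<bar> \<le> 1 \<Longrightarrow> \<bar>p * s + q * c\<bar> \<le> \<bar>p\<bar> + \<bar>q\<bar>" for p q s c :: real
proof -
  assume "\<bar>s\<bar> \<le> 1" "\<bar>c\<bar> \<le> 1"
  then have "\<bar>p * s\<bar> \<le> \<bar>p\<bar>" "\<bar>q * c\<bar> \<le> \<bar>q\<bar>"
    by (auto simp: abs_mult intro: mult_left_le)
  then show ?thesis by linarith
qed

lemma main_off:
  assumes L4: "L \<ge> 4" and T2: "T \<ge> 2" and TL: "4 * T\<^sup>2 \<le> L\<^sup>2"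
    and x: "\<bar>x\<bar> \<le> T" and y: "\<bar>y\<bar> \<le> T" and xy: "x \<noteq> y"
    and E0a: "\<bar>Ef f g L 0 - 2 / pi * L\<bar> \<le> 2 / L" and E0b: "Ef f g L 0 \<le> 4/5 * L"
    and NL: "0 \<le> N - L" "N - L \<le> 1 / (2 * L)"
  shows "\<bar>f x * f y / 2 + (f x * g y - g x * f y) / (2 * (x - y)) - sin (N * (x - y)) / (pi * (x - y))\<bar>
         \<le> 17 * T\<^sup>2 / L"
proof -
  define E0 where "E0 = Ef f g L 0"
  define r where "r = sqrt E0"
  define d where "d = x - y"
  define \<mu> where "\<mu> = 2 / pi"
  have L0: "L > 0" using L4 by simp
  have d0: "d \<noteq> 0" using xy by (simp add: d_def)
  have E0nn: "E0 \<ge> 0" by (simp add: E0_def Ef_def)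
  have rr: "r * r = E0" "r \<ge> 0" using E0nn by (simp_all add: r_def)
  have fsq: "\<And>t. \<bar>t\<bar> \<le> T \<Longrightarrow> (f t)\<^sup>2 \<le> 4/3 * E0 / L\<^sup>2"
    using f_bounds(1)[OF TL L0] by (simp add: E0_def)
  have fabs: "\<bar>f t\<bar> \<le> 6/5 * r / L" if "\<bar>t\<bar> \<le> T" for t
  proof -
    have q1: "(6/5 * r / L)\<^sup>2 = 36/25 * (r * r) / L\<^sup>2" by (simp add: power2_eq_square)
    have q2: "4/3 * E0 / L\<^sup>2 \<le> 36/25 * E0 / L\<^sup>2" using E0nn L0 by (intro divide_right_mono mult_right_mono) simp_all
    have "(f t)\<^sup>2 \<le> (6/5 * r / L)\<^sup>2" unfolding q1 rr(1) using fsq[OF that] q2 by linarith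
    moreover have "0 \<le> 6/5 * r / L" using rr(2) L0 by simp
    ultimately show ?thesis by (rule power2_le_imp_le[of "\<bar>f t\<bar>", unfolded power2_abs])
  qed
  have gabs: "\<bar>g t\<bar> \<le> r" if "\<bar>t\<bar> \<le> T" for t
  proof -
    have "(g t)\<^sup>2 \<le> r\<^sup>2" using f_bounds(2)[OF TL L0 that] rr(1) unfolding E0_def power2_eq_square[of r] by simp
    then show ?thesis by (rule power2_le_imp_le[of "\<bar>g t\<bar>", unfolded power2_abs]) (rule rr(2))
  qed
  define a where "a t = L * f t * cos (L * t) - g t * sin (L * t)" for t
  define b where "b t = L * f t * sin (L * t) + g t * cos (L * t)" for t
  have da: "(a has_real_derivative (- (t\<^sup>2 * f t * sin (L * t)))) (at t)" for t
  proof -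
    have e: "a = (\<lambda>t. L * f t * cos (L * t) - g t * sin (L * t))" by (rule ext) (simp add: a_def)
    show ?thesis unfolding e
      by (rule derivative_eq_intros df dg refl | simp add: algebra_simps power2_eq_square)+
  qed
  have db: "(b has_real_derivative (t\<^sup>2 * f t * cos (L * t))) (at t)" for t
  proof -
    have e: "b = (\<lambda>t. L * f t * sin (L * t) + g t * cos (L * t))" by (rule ext) (simp add: b_def)
    show ?thesis unfolding e
      by (rule derivative_eq_intros df dg refl | simp add: algebra_simps power2_eq_square)+
  qed
  have between: "\<bar>t\<bar> \<le> T" if "min x y \<le> t" "t \<le> max x y" for t
    using that x y by (auto simp: abs_le_iff)
  define B where "B = T\<^sup>2 * (6/5 * r / L)"
  have Bnn: "B \<ge> 0" using rr L0 by (simp add: B_def)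
  have dbound: "\<bar>t\<^sup>2 * f t * w\<bar> \<le> B" if "\<bar>t\<bar> \<le> T" "\<bar>w\<bar> \<le> 1" for t w
  proof -
    have tT: "t\<^sup>2 \<le> T\<^sup>2" using that(1) by (rule sq_le)
    have "\<bar>t\<^sup>2 * f t * w\<bar> = t\<^sup>2 * \<bar>f t\<bar> * \<bar>w\<bar>" by (simp add: abs_mult)
    also have "\<dots> \<le> t\<^sup>2 * \<bar>f t\<bar>" using that(2) by (simp add: mult_left_le)
    also have "\<dots> \<le> B" unfolding B_def using tT fabs[OF that(1)] by (intro mult_mono) auto
    finally show ?thesis .
  qed
  have Da: "\<bar>a y - a x\<bar> \<le> B * \<bar>y - x\<bar>"
  proof (rule mvt_bound[where \<phi>'="\<lambda>t. - (t\<^sup>2 * f t * sin (L * t))"])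
    fix t assume t: "min x y \<le> t" "t \<le> max x y"
    show "(a has_real_derivative - (t\<^sup>2 * f t * sin (L * t))) (at t)" by (rule da)
    have "\<bar>t\<^sup>2 * f t * sin (L * t)\<bar> \<le> B" by (rule dbound[OF between[OF t]]) simp
    then show "\<bar>- (t\<^sup>2 * f t * sin (L * t))\<bar> \<le> B" by simp
  qed
  have Db: "\<bar>b y - b x\<bar> \<le> B * \<bar>y - x\<bar>"
  proof (rule mvt_bound[where \<phi>'="\<lambda>t. t\<^sup>2 * f t * cos (L * t)"])
    fix t assume t: "min x y \<le> t" "t \<le> max x y"
    show "(b has_real_derivative (t\<^sup>2 * f t * cos (L * t))) (at t)" by (rule db)
    show "\<bar>t\<^sup>2 * f t * cos (L * t)\<bar> \<le> B" by (rule dbound[OF between[OF t]]) simp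
  qed
  have ax: "\<bar>a x\<bar> \<le> 11/5 * r"
  proof -
    have "\<bar>a x\<bar> \<le> \<bar>L * f x\<bar> + \<bar>- g x\<bar>" unfolding a_def
      using abs_comb[of "cos (L*x)" "sin (L*x)" "L * f x" "- g x"] by (simp add: algebra_simps)
    also have "\<bar>L * f x\<bar> \<le> 6/5 * r" using fabs[OF x] L0 by (simp add: abs_mult field_simps)
    finally show ?thesis using gabs[OF x] by simp
  qed
  have bx: "\<bar>b x\<bar> \<le> 11/5 * r"
  proof -
    have "\<bar>b x\<bar> \<le> \<bar>L * f x\<bar> + \<bar>g x\<bar>" unfolding b_def
      using abs_comb[of "sin (L*x)" "cos (L*x)" "L * f x" "g x"] by (simp add: algebra_simps)
    also have "\<bar>L * f x\<bar> \<le> 6/5 * r" using fabs[OF x] L0 by (simp add: abs_mult field_simps)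
    finally show ?thesis using gabs[OF x] by simp
  qed
  define R1 where "R1 = (a x * (a y - a x) + b x * (b y - b x)) * sin (L * d)
                       + (a x * (b y - b x) - b x * (a y - a x)) * cos (L * d)"
  have ident: "L * (f x * g y - g x * f y) = (L\<^sup>2 * (f x)\<^sup>2 + (g x)\<^sup>2) * sin (L * d) + R1"
  proof -
    have sd: "sin (L * d) = sin (L * x) * cos (L * y) - cos (L * x) * sin (L * y)"
      unfolding d_def by (simp add: right_diff_distrib sin_diff)
    have cd: "cos (L * d) = cos (L * x) * cos (L * y) + sin (L * x) * sin (L * y)"
      unfolding d_def by (simp add: right_diff_distrib cos_diff)
    define cx where "cx = cos (L * x)"
    define sx where "sx = sin (L * x)"
    define cy where "cy = cos (L * y)"
    define sy where "sy = sin (L * y)"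
    define P where "P = L\<^sup>2 * f x * f y + g x * g y"
    define Q where "Q = L * (f x * g y - g x * f y)"
    have px: "cx\<^sup>2 + sx\<^sup>2 = 1" by (simp add: cx_def sx_def)
    have py: "cy\<^sup>2 + sy\<^sup>2 = 1" by (simp add: cy_def sy_def)
    have SC: "(sin (L * d))\<^sup>2 + (cos (L * d))\<^sup>2 = 1" by simp
    have k1: "a x * a y + b x * b y = P * cos (L * d) + Q * sin (L * d)"
      unfolding sd cd a_def b_def P_def Q_def cx_def[symmetric] sx_def[symmetric] cy_def[symmetric] sy_def[symmetric]
      by (simp add: algebra_simps power2_eq_square)
    have k2: "a x * b y - b x * a y = - P * sin (L * d) + Q * cos (L * d)"
      unfolding sd cd a_def b_def P_def Q_def cx_def[symmetric] sx_def[symmetric] cy_def[symmetric] sy_def[symmetric]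
      by (simp add: algebra_simps power2_eq_square)
    have k4: "(a x)\<^sup>2 + (b x)\<^sup>2 = L\<^sup>2 * (f x)\<^sup>2 + (g x)\<^sup>2"
    proof -
      have "(a x)\<^sup>2 + (b x)\<^sup>2 = (L\<^sup>2 * (f x)\<^sup>2 + (g x)\<^sup>2) * (cx\<^sup>2 + sx\<^sup>2)"
        unfolding a_def b_def cx_def[symmetric] sx_def[symmetric] by (simp add: algebra_simps power2_eq_square)
      then show ?thesis using px by simp
    qed
    have "R1 = (a x * a y + b x * b y) * sin (L * d) + (a x * b y - b x * a y) * cos (L * d)
              - ((a x)\<^sup>2 + (b x)\<^sup>2) * sin (L * d)"
      unfolding R1_def by (simp add: algebra_simps power2_eq_square)
    also have "\<dots> = Q - (L\<^sup>2 * (f x)\<^sup>2 + (g x)\<^sup>2) * sin (L * d)"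
    proof -
      have SC': "cos (L * d) * cos (L * d) = 1 - sin (L * d) * sin (L * d)" using SC by (simp add: power2_eq_square)
      show ?thesis unfolding k1 k2 k4 by (simp add: algebra_simps SC')
    qed
    finally show ?thesis unfolding Q_def by simp
  qed
  have R1b: "\<bar>R1\<bar> \<le> 264/25 * E0 * T\<^sup>2 * \<bar>d\<bar> / L"
  proof -
    have "\<bar>R1\<bar> \<le> \<bar>a x * (a y - a x) + b x * (b y - b x)\<bar> + \<bar>a x * (b y - b x) - b x * (a y - a x)\<bar>"
      unfolding R1_def by (rule abs_comb) auto
    also have "\<dots> \<le> (\<bar>a x\<bar> * \<bar>a y - a x\<bar> + \<bar>b x\<bar> * \<bar>b y - b x\<bar>) + (\<bar>a x\<bar> * \<bar>b y - b x\<bar> + \<bar>b x\<bar> * \<bar>a y - a x\<bar>)"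
      by (intro add_mono) (simp_all add: abs_mult[symmetric] abs_triangle_ineq abs_triangle_ineq4)
    also have "\<dots> \<le> (11/5 * r * (B * \<bar>d\<bar>) + 11/5 * r * (B * \<bar>d\<bar>)) + (11/5 * r * (B * \<bar>d\<bar>) + 11/5 * r * (B * \<bar>d\<bar>))"
    proof -
      have Dad: "\<bar>a y - a x\<bar> \<le> B * \<bar>d\<bar>" using Da by (simp add: d_def abs_minus_commute)
      have Dbd: "\<bar>b y - b x\<bar> \<le> B * \<bar>d\<bar>" using Db by (simp add: d_def abs_minus_commute)
      have r0: "0 \<le> 11/5 * r" using rr by simp
      have m1: "\<bar>a x\<bar> * \<bar>a y - a x\<bar> \<le> 11/5 * r * (B * \<bar>d\<bar>)" by (rule mult_mono[OF ax Dad r0 abs_ge_zero])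
      have m2: "\<bar>b x\<bar> * \<bar>b y - b x\<bar> \<le> 11/5 * r * (B * \<bar>d\<bar>)" by (rule mult_mono[OF bx Dbd r0 abs_ge_zero])
      have m3: "\<bar>a x\<bar> * \<bar>b y - b x\<bar> \<le> 11/5 * r * (B * \<bar>d\<bar>)" by (rule mult_mono[OF ax Dbd r0 abs_ge_zero])
      have m4: "\<bar>b x\<bar> * \<bar>a y - a x\<bar> \<le> 11/5 * r * (B * \<bar>d\<bar>)" by (rule mult_mono[OF bx Dad r0 abs_ge_zero])
      show ?thesis using m1 m2 m3 m4 by linarith
    qed
    also have "\<dots> = 264/25 * E0 * T\<^sup>2 * \<bar>d\<bar> / L"
      unfolding B_def using rr(1)[symmetric] by (simp add: field_simps)
    finally show ?thesis .
  qed
  define t1 where "t1 = f x * f y / 2"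
  define t2 where "t2 = ((L\<^sup>2 * (f x)\<^sup>2 + (g x)\<^sup>2) / L - \<mu>) * (sin (L * d) / (2 * d))"
  define t3 where "t3 = \<mu> * (sin (L * d) - sin (N * d)) / (2 * d)"
  define t4 where "t4 = R1 / (2 * L * d)"
  have decomp: "f x * f y / 2 + (f x * g y - g x * f y) / (2 * (x - y)) - sin (N * (x - y)) / (pi * (x - y))
      = t1 + t2 + t3 + t4"
    unfolding t1_def t2_def t3_def t4_def \<mu>_def d_def[symmetric]
    by (rule decomp_alg[OF _ d0 ident]) (use L0 in simp)
  have T4: "4 \<le> T\<^sup>2"
  proof -
    have "2 * 2 \<le> T * T" using T2 by (intro mult_mono) auto
    then show ?thesis by (simp add: power2_eq_square)
  qed
  define X where "X = E0 * T\<^sup>2 / L\<^sup>2"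
  define Y where "Y = T\<^sup>2 / L"
  define Z where "Z = 1 / L"
  define V where "V = E0 / L\<^sup>2"
  have b1: "\<bar>t1\<bar> \<le> 2/3 * V"
  proof -
    have "0 \<le> (\<bar>f x\<bar> - \<bar>f y\<bar>)\<^sup>2" by simp
    then have "2 * (\<bar>f x\<bar> * \<bar>f y\<bar>) \<le> (f x)\<^sup>2 + (f y)\<^sup>2" by (simp add: power2_diff)
    then have "\<bar>f x * f y\<bar> \<le> ((f x)\<^sup>2 + (f y)\<^sup>2) / 2" by (simp add: abs_mult)
    also have "\<dots> \<le> 4/3 * E0 / L\<^sup>2" using fsq[OF x] fsq[OF y] by simp
    finally show ?thesis unfolding t1_def V_def by simp
  qed
  have sinb: "\<bar>sin (L * d) / (2 * d)\<bar> \<le> L / 2"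
  proof -
    have "\<bar>sin (L * d)\<bar> \<le> L * \<bar>d\<bar>" using abs_sin_x_le_abs_x[of "L * d"] L0 by (simp add: abs_mult)
    then show ?thesis using d0 L0 by (simp add: abs_divide abs_mult field_simps)
  qed
  have b2: "\<bar>t2\<bar> \<le> 7/6 * X + Z"
  proof -
    have ex: "L\<^sup>2 * (f x)\<^sup>2 + (g x)\<^sup>2 = Ef f g L x + x\<^sup>2 * (f x)\<^sup>2" by (simp add: Ef_def algebra_simps)
    have xT: "x\<^sup>2 \<le> T\<^sup>2" using x by (rule sq_le)
    have u1: "x\<^sup>2 * (f x)\<^sup>2 \<le> T\<^sup>2 * (4/3 * E0 / L\<^sup>2)" using xT fsq[OF x] by (intro mult_mono) auto
    have u1': "T\<^sup>2 * (4/3 * E0 / L\<^sup>2) = 4/3 * X" unfolding X_def by simp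
    have u2: "\<bar>Ef f g L x - E0\<bar> \<le> X" using f_bounds(3)[OF TL L0 x] by (simp add: E0_def X_def)
    have nn: "0 \<le> x\<^sup>2 * (f x)\<^sup>2" by simp
    have "\<bar>(L\<^sup>2 * (f x)\<^sup>2 + (g x)\<^sup>2) - E0\<bar> \<le> \<bar>Ef f g L x - E0\<bar> + x\<^sup>2 * (f x)\<^sup>2"
      unfolding ex using nn by arith
    also have "\<dots> \<le> 7/3 * X" using u1 u1' u2 by linarith
    finally have c0: "\<bar>(L\<^sup>2 * (f x)\<^sup>2 + (g x)\<^sup>2) - E0\<bar> \<le> 7/3 * X" .
    have "\<bar>(L\<^sup>2 * (f x)\<^sup>2 + (g x)\<^sup>2) / L - E0 / L\<bar> = \<bar>(L\<^sup>2 * (f x)\<^sup>2 + (g x)\<^sup>2) - E0\<bar> / L"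
      using L0 by (simp add: diff_divide_distrib[symmetric] abs_divide)
    also have "\<dots> \<le> 7/3 * X / L" using L0 by (intro divide_right_mono[OF c0]) simp
    finally have c1: "\<bar>(L\<^sup>2 * (f x)\<^sup>2 + (g x)\<^sup>2) / L - E0 / L\<bar> \<le> 7/3 * X / L" .
    have c2: "\<bar>E0 / L - \<mu>\<bar> \<le> 2 / L / L"
    proof -
      have "E0 / L - \<mu> = (E0 - 2 / pi * L) / L" using L0 unfolding \<mu>_def
        by (simp add: field_simps)
      then have "\<bar>E0 / L - \<mu>\<bar> = \<bar>E0 - 2 / pi * L\<bar> / L" using L0 by (simp add: abs_divide)
      moreover have "\<bar>E0 - 2 / pi * L\<bar> / L \<le> 2 / L / L"
        using L0 by (intro divide_right_mono) (use E0a[folded E0_def] in simp_all)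
      ultimately show ?thesis by simp
    qed
    have c: "\<bar>(L\<^sup>2 * (f x)\<^sup>2 + (g x)\<^sup>2) / L - \<mu>\<bar> \<le> 7/3 * X / L + 2 / L / L"
      using c1 c2 by linarith
    have "\<bar>t2\<bar> \<le> (7/3 * X / L + 2 / L / L) * (L / 2)"
      unfolding t2_def abs_mult using c sinb by (intro mult_mono) auto
    also have "\<dots> = 7/6 * X + Z" using L0 unfolding Z_def by (simp add: field_simps)
    finally show ?thesis .
  qed
  have b3: "\<bar>t3\<bar> \<le> Z / 4"
  proof -
    have "\<bar>sin (L * d) - sin (N * d)\<bar> \<le> \<bar>L * d - N * d\<bar>" by (rule sin_lip)
    also have "\<dots> = (N - L) * \<bar>d\<bar>" using NL by (simp add: left_diff_distrib[symmetric] abs_mult)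
    also have "\<dots> \<le> 1 / (2 * L) * \<bar>d\<bar>" by (rule mult_right_mono[OF NL(2) abs_ge_zero])
    finally have s1: "\<bar>sin (L * d) - sin (N * d)\<bar> \<le> 1 / (2 * L) * \<bar>d\<bar>" .
    have mu0: "0 < \<mu>" "\<mu> \<le> 1" unfolding \<mu>_def using pi_ge_two by auto
    have "\<bar>t3\<bar> = \<mu> * \<bar>sin (L * d) - sin (N * d)\<bar> / (2 * \<bar>d\<bar>)"
      unfolding t3_def using mu0 by (simp add: abs_divide abs_mult)
    also have "\<dots> \<le> 1 * (1 / (2 * L) * \<bar>d\<bar>) / (2 * \<bar>d\<bar>)"
      using mu0 s1 d0 by (intro divide_right_mono mult_mono) auto
    also have "\<dots> = Z / 4" unfolding Z_def using d0 L0 by (simp add: field_simps)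
    finally show ?thesis .
  qed
  have b4: "\<bar>t4\<bar> \<le> 132/25 * X"
  proof -
    have "\<bar>t4\<bar> = \<bar>R1\<bar> / (2 * L * \<bar>d\<bar>)" unfolding t4_def using L0 by (simp add: abs_divide abs_mult)
    also have "\<dots> \<le> (264/25 * E0 * T\<^sup>2 * \<bar>d\<bar> / L) / (2 * L * \<bar>d\<bar>)"
      using R1b L0 d0 by (intro divide_right_mono) auto
    also have "\<dots> = 132/25 * X" unfolding X_def using L0 d0 by (simp add: field_simps power2_eq_square)
    finally show ?thesis .
  qed
  have EL: "V \<le> 4/5 * Z" using E0b L0 unfolding E0_def V_def Z_def by (simp add: field_simps power2_eq_square)
  have XV: "X = V * T\<^sup>2" unfolding X_def V_def by simp
  have YZ: "Y = Z * T\<^sup>2" unfolding Y_def Z_def by simp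
  have ELT: "X \<le> 4/5 * Y" unfolding XV YZ using mult_right_mono[OF EL, of "T\<^sup>2"] by simp
  have Zp: "0 \<le> Z" using L0 by (simp add: Z_def)
  have oneL: "Z \<le> Y / 4" unfolding YZ using mult_left_mono[OF T4 Zp] by linarith
  have "\<bar>t1 + t2 + t3 + t4\<bar> \<le> \<bar>t1\<bar> + \<bar>t2\<bar> + \<bar>t3\<bar> + \<bar>t4\<bar>" by linarith
  also have "\<dots> \<le> 17 * Y"
  proof -
    have Y0: "0 \<le> Y" unfolding YZ using Zp by simp
    have gen: "\<And>A1 A2 A3 A4. A1 \<le> 2/3 * V \<Longrightarrow> A2 \<le> 7/6 * X + Z \<Longrightarrow> A3 \<le> Z / 4 \<Longrightarrow> A4 \<le> 132/25 * X
        \<Longrightarrow> A1 + A2 + A3 + A4 \<le> 17 * Y"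
      using EL ELT oneL Y0 by linarith
    show ?thesis by (rule gen[OF b1 b2 b3 b4])
  qed
  also have "17 * Y = 17 * T\<^sup>2 / L" unfolding Y_def by simp
  finally show ?thesis unfolding decomp .
qed

lemma main_diag:
  assumes L4: "L \<ge> 4" and T2: "T \<ge> 2" and TL: "4 * T\<^sup>2 \<le> L\<^sup>2"
    and y: "\<bar>y\<bar> \<le> T"
    and E0a: "\<bar>Ef f g L 0 - 2 / pi * L\<bar> \<le> 2 / L" and E0b: "Ef f g L 0 \<le> 4/5 * L"
    and NL: "0 \<le> N - L" "N - L \<le> 1 / (2 * L)"
  shows "\<bar>((f y)\<^sup>2 + Ef f g L y) / 2 - N / pi\<bar> \<le> 17 * T\<^sup>2 / L"
proof -
  define E0 where "E0 = Ef f g L 0"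
  define \<mu> where "\<mu> = 2 / pi"
  have L0: "L > 0" using L4 by simp
  have T4: "4 \<le> T\<^sup>2"
  proof -
    have "2 * 2 \<le> T * T" using T2 by (intro mult_mono) auto
    then show ?thesis by (simp add: power2_eq_square)
  qed
  define X where "X = E0 * T\<^sup>2 / L\<^sup>2"
  define Y where "Y = T\<^sup>2 / L"
  define Z where "Z = 1 / L"
  define V where "V = E0 / L\<^sup>2"
  have mu0: "0 < \<mu>" "\<mu> \<le> 1" unfolding \<mu>_def using pi_ge_two by auto
  have e: "((f y)\<^sup>2 + Ef f g L y) / 2 - N / pi
      = (f y)\<^sup>2 / 2 + (Ef f g L y - E0) / 2 + (E0 - 2 / pi * L) / 2 + \<mu> * (L - N) / 2"
    unfolding \<mu>_def by (simp add: field_simps)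
  have b1: "(f y)\<^sup>2 / 2 \<le> 2/3 * V" using f_bounds(1)[OF TL L0 y] unfolding V_def E0_def by simp
  have b1': "0 \<le> (f y)\<^sup>2 / 2" by simp
  have b2: "\<bar>Ef f g L y - E0\<bar> \<le> X" using f_bounds(3)[OF TL L0 y] unfolding X_def E0_def by simp
  have b3: "\<bar>E0 - 2 / pi * L\<bar> \<le> 2 * Z" using E0a unfolding E0_def Z_def by simp
  have b4: "\<bar>\<mu> * (L - N)\<bar> \<le> Z / 2"
  proof -
    have "\<bar>\<mu> * (L - N)\<bar> = \<mu> * (N - L)" using mu0 NL by (simp add: abs_mult)
    also have "\<dots> \<le> 1 * (1 / (2 * L))" using mu0 NL by (intro mult_mono) auto
    finally show ?thesis unfolding Z_def by simp
  qed
  have EL: "V \<le> 4/5 * Z" using E0b L0 unfolding E0_def V_def Z_def by (simp add: field_simps power2_eq_square)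
  have XV: "X = V * T\<^sup>2" unfolding X_def V_def by simp
  have YZ: "Y = Z * T\<^sup>2" unfolding Y_def Z_def by simp
  have ELT: "X \<le> 4/5 * Y" unfolding XV YZ using mult_right_mono[OF EL, of "T\<^sup>2"] by simp
  have Zp: "0 \<le> Z" using L0 by (simp add: Z_def)
  have oneL: "Z \<le> Y / 4" unfolding YZ using mult_left_mono[OF T4 Zp] by linarith
  have Y0: "0 \<le> Y" unfolding YZ using Zp by simp
  have gen: "\<And>A1 A2 A3 A4. 0 \<le> A1 \<Longrightarrow> A1 \<le> 2/3 * V \<Longrightarrow> \<bar>A2\<bar> \<le> X \<Longrightarrow> \<bar>A3\<bar> \<le> 2 * Z \<Longrightarrow> \<bar>A4\<bar> \<le> Z / 2
        \<Longrightarrow> \<bar>A1 + A2 / 2 + A3 / 2 + A4 / 2\<bar> \<le> 17 * Y"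
    using EL ELT oneL Y0 by linarith
  have "\<bar>((f y)\<^sup>2 + Ef f g L y) / 2 - N / pi\<bar> \<le> 17 * Y"
    unfolding e using gen[OF b1' b1 b2 b3 b4] by simp
  then show ?thesis unfolding Y_def by simp
qed

end


fun al :: "nat \<Rightarrow> real" where
  "al 0 = 1"
| "al (Suc m) = al m * (2 * real m + 1) / (2 * real m + 2)"

definition WP :: "nat \<Rightarrow> real" where
  "WP n = (\<Prod>k=1..n. (4*real k^2) / (4*real k^2 - 1))"

lemma WP_Suc: "WP (Suc m) = WP m * ((2 * real m + 2)\<^sup>2 / ((2 * real m + 1) * (2 * real m + 3)))"
proof -
  have "WP (Suc m) = (4 * real (Suc m)^2) / (4 * real (Suc m)^2 - 1) * WP m"
    unfolding WP_def by (subst prod.nat_ivl_Suc') auto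
  also have "(4 * real (Suc m)^2) / (4 * real (Suc m)^2 - 1) = (2 * real m + 2)\<^sup>2 / ((2 * real m + 1) * (2 * real m + 3))"
    by (simp add: power2_eq_square algebra_simps)
  finally show ?thesis by simp
qed

lemma al_pos: "al m > 0" by (induction m) auto

lemma WP_al: "(2 * real m + 1) * (al m)\<^sup>2 * WP m = 1"
proof (induction m)
  case 0 then show ?case by (simp add: WP_def)
next
  case (Suc m)
  have alg: "C * (x * A / B)\<^sup>2 * (w * (B\<^sup>2 / (A * C))) = A * x\<^sup>2 * w"
    if "A > 0" "B > 0" "C > 0" for A B C x w :: real
    using that by (simp add: field_simps power2_eq_square)
  have "(2 * real (Suc m) + 1) * (al (Suc m))\<^sup>2 * WP (Suc m)
      = (2 * real m + 3) * (al m * (2 * real m + 1) / (2 * real m + 2))\<^sup>2 * (WP m * ((2 * real m + 2)\<^sup>2 / ((2 * real m + 1) * (2 * real m + 3))))"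
  proof -
    have e: "2 * real (Suc m) + 1 = 2 * real m + 3" by simp
    show ?thesis by (simp only: WP_Suc al.simps e)
  qed
  also have "\<dots> = (2 * real m + 1) * (al m)\<^sup>2 * WP m" by (rule alg) auto
  also have "\<dots> = 1" by (rule Suc.IH)
  finally show ?case .
qed

lemma WP_pos: "WP m > 0"
proof -
  have p: "(2 * real m + 1) * (al m)\<^sup>2 > 0" using al_pos[of m] by simp
  have "WP m = 1 / ((2 * real m + 1) * (al m)\<^sup>2)" using WP_al[of m] p
    by (simp add: field_simps)
  then show ?thesis using p by simp
qed

lemma WP_inc: "incseq WP"
proof (rule incseq_SucI)
  fix m
  have q: "(2 * real m + 1) * (2 * real m + 3) > 0" by simp
  have "1 \<le> (2 * real m + 2)\<^sup>2 / ((2 * real m + 1) * (2 * real m + 3))"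
    using q by (subst le_divide_eq_1_pos) (auto simp: power2_eq_square algebra_simps)
  then have "WP m * 1 \<le> WP m * ((2 * real m + 2)\<^sup>2 / ((2 * real m + 1) * (2 * real m + 3)))"
    using WP_pos[of m] by (intro mult_left_mono) auto
  then show "WP m \<le> WP (Suc m)" by (simp add: WP_Suc)
qed

lemma WP_lim: "WP \<longlonglongrightarrow> pi / 2"
  unfolding WP_def by (rule wallis)

lemma al_lower: "2 / pi \<le> (2 * real m + 1) * (al m)\<^sup>2"
proof -
  have W1: "WP m \<le> pi / 2" by (rule incseq_le[OF WP_inc WP_lim])
  have W0: "WP m > 0" by (rule WP_pos)
  have K: "(2 * real m + 1) * (al m)\<^sup>2 = 1 / WP m" using WP_al[of m] W0
    by (simp add: field_simps)
  have "1 / (pi / 2) \<le> 1 / WP m" using W1 W0 by (intro divide_left_mono) auto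
  then show ?thesis unfolding K by simp
qed

lemma al_upper: "2 * real m * (al m)\<^sup>2 \<le> 2 / pi"
proof -
  define u where "u m = 2 * real m * (al m)\<^sup>2" for m
  have inc: "incseq u"
  proof (rule incseq_SucI)
    fix m
    define A where "A = 2 * real m + 1"
    define B where "B = 2 * real m + 2"
    have B0: "B > 0" unfolding B_def by simp
    have alg: "B * (x * A / B)\<^sup>2 = x\<^sup>2 * (A\<^sup>2 / B)" for x using B0 by (simp add: field_simps power2_eq_square)
    have "u (Suc m) = B * (al m * A / B)\<^sup>2" unfolding u_def A_def B_def by simp
    also have "\<dots> = (al m)\<^sup>2 * (A\<^sup>2 / B)" by (rule alg)
    finally have us: "u (Suc m) = (al m)\<^sup>2 * (A\<^sup>2 / B)" .
    have "2 * real m \<le> A\<^sup>2 / B" using B0 unfolding A_def B_def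
      by (subst le_divide_eq) (auto simp: power2_eq_square algebra_simps)
    then have "(al m)\<^sup>2 * (2 * real m) \<le> (al m)\<^sup>2 * (A\<^sup>2 / B)" by (rule mult_left_mono) simp
    then show "u m \<le> u (Suc m)" unfolding us by (simp add: u_def mult.commute)
  qed
  have eq: "u = (\<lambda>m. (2 * real m / (2 * real m + 1)) * inverse (WP m))"
  proof
    fix m
    have W0: "WP m > 0" by (rule WP_pos)
    have "inverse (WP m) = (2 * real m + 1) * (al m)\<^sup>2" using WP_al[of m] W0
      by (simp add: field_simps)
    then show "u m = (2 * real m / (2 * real m + 1)) * inverse (WP m)"
      unfolding u_def by simp
  qed
  have sm: "strict_mono (\<lambda>m::nat. 2 * m)" by (rule strict_monoI) simp
  have "((\<lambda>n. of_nat n / of_nat (Suc n) :: real) \<circ> (\<lambda>m. 2 * m)) \<longlonglongrightarrow> 1"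
    by (rule LIMSEQ_subseq_LIMSEQ[OF LIMSEQ_n_over_Suc_n sm])
  then have l1: "(\<lambda>m. 2 * real m / (2 * real m + 1)) \<longlonglongrightarrow> 1" by (simp add: o_def add.commute)
  have l2: "(\<lambda>m. inverse (WP m)) \<longlonglongrightarrow> inverse (pi / 2)"
    by (rule tendsto_inverse[OF WP_lim]) simp
  have "u \<longlonglongrightarrow> 1 * inverse (pi / 2)"
    unfolding eq by (rule tendsto_mult[OF l1 l2])
  then have "u m \<le> 1 * inverse (pi / 2)" by (rule incseq_le[OF inc])
  then show ?thesis unfolding u_def by simp
qed

lemma hf0_odd: "hermite_fun (2 * m + 1) 0 = 0"
proof (induction m)
  case 0
  have "sc 0 * hermite_fun 1 0 = 0" using hf_base[of 0] by simp
  then show ?case using sc_pos[of 0] by simp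
next
  case (Suc m)
  have "sc (Suc (2*m+1)) * hermite_fun (Suc (Suc (2*m+1))) 0 = 0 * hermite_fun (Suc (2*m+1)) 0 - sc (2*m+1) * hermite_fun (2*m+1) 0"
    by (rule hf_rec)
  then have "sc (Suc (2*m+1)) * hermite_fun (Suc (Suc (2*m+1))) 0 = 0" using Suc by simp
  then show ?case using sc_pos[of "Suc (2*m+1)"] by simp
qed

lemma hf0_even: "(hermite_fun (2 * m) 0)\<^sup>2 = al m / sqrt pi"
proof (induction m)
  case 0
  have "cn 0 = pi powr (1/4)" by (simp add: cn_def)
  moreover have "(pi powr (1/4))\<^sup>2 = sqrt pi"
  proof -
    have "(pi powr (1/4))\<^sup>2 = pi powr (1/4) * pi powr (1/4)" by (simp add: power2_eq_square)
    also have "\<dots> = pi powr (1/2)" by (simp add: powr_add[symmetric])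
    also have "\<dots> = sqrt pi" by (simp add: powr_half_sqrt)
    finally show ?thesis .
  qed
  moreover have "hermite_fun (2 * 0) 0 = 1 / cn 0" by (simp add: hf_eq)
  ultimately show ?case by (simp add: power_divide)
next
  case (Suc m)
  have r: "sc (Suc (2*m)) * hermite_fun (Suc (Suc (2*m))) 0 = 0 * hermite_fun (Suc (2*m)) 0 - sc (2*m) * hermite_fun (2*m) 0"
    by (rule hf_rec)
  then have "(sc (Suc (2*m)))\<^sup>2 * (hermite_fun (Suc (Suc (2*m))) 0)\<^sup>2 = (sc (2*m))\<^sup>2 * (hermite_fun (2*m) 0)\<^sup>2"
    by (simp add: power_mult_distrib[symmetric])
  then have e1: "(2 * real m + 2) * (hermite_fun (2 * Suc m) 0)\<^sup>2 = (2 * real m + 1) * (hermite_fun (2*m) 0)\<^sup>2"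
    by (simp add: sc_sq field_simps)
  have "(hermite_fun (2 * Suc m) 0)\<^sup>2 = (2 * real m + 1) * (hermite_fun (2*m) 0)\<^sup>2 / (2 * real m + 2)"
    using e1 by (simp add: field_simps)
  also have "\<dots> = al (Suc m) / sqrt pi" unfolding Suc.IH by (simp add: mult.commute)
  finally show ?case .
qed



lemma q_bounds:
  fixes M q :: real
  assumes M1: "M \<ge> 1" and up: "M * q \<le> 1" and lo: "2 \<le> (2 * M + 1) * q"
  shows "\<bar>(4 * M + 1)\<^sup>2 * q - 4 * (4 * M + 1)\<bar> \<le> 8"
    and "\<bar>16 * M\<^sup>2 * q - 4 * (4 * M - 1)\<bar> \<le> 8"
proof -
  have q0: "q \<ge> 0"
  proof (rule ccontr)
    assume "\<not> q \<ge> 0"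
    then have "(2 * M + 1) * q < 0" using M1 by (simp add: mult_pos_neg)
    then show False using lo by simp
  qed
  have e1: "(4 * M + 1)\<^sup>2 * q = 16 * (M * (M * q)) + 8 * (M * q) + q" by (simp add: algebra_simps power2_eq_square)
  have e2: "16 * M\<^sup>2 * q = 16 * (M * (M * q))" by (simp add: algebra_simps power2_eq_square)
  have f1: "M * (M * q) \<le> M * 1" using up M1 by (intro mult_left_mono) auto
  have f2: "M * 2 \<le> M * ((2 * M + 1) * q)" using lo M1 by (intro mult_left_mono) auto
  have f2': "M * ((2 * M + 1) * q) = 2 * (M * (M * q)) + M * q" by (simp add: algebra_simps)
  have f3: "q \<le> M * q" using q0 M1 by (simp add: mult_right_mono[of 1 M q, simplified])
  have g1: "\<And>a b. a \<le> M \<Longrightarrow> 2 * M \<le> 2 * a + b \<Longrightarrow> q \<le> b \<Longrightarrow> b \<le> 1 \<Longrightarrow> 0 \<le> q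
     \<Longrightarrow> \<bar>16 * a + 8 * b + q - 4 * (4 * M + 1)\<bar> \<le> 8 \<and> \<bar>16 * a - 4 * (4 * M - 1)\<bar> \<le> 8"
    by (auto simp: abs_le_iff)
  have g: "\<bar>16 * (M * (M * q)) + 8 * (M * q) + q - 4 * (4 * M + 1)\<bar> \<le> 8 \<and> \<bar>16 * (M * (M * q)) - 4 * (4 * M - 1)\<bar> \<le> 8"
    by (rule g1) (use f1 f2 f2' f3 up q0 in auto)
  show "\<bar>(4 * M + 1)\<^sup>2 * q - 4 * (4 * M + 1)\<bar> \<le> 8" unfolding e1 using g by blast
  show "\<bar>16 * M\<^sup>2 * q - 4 * (4 * M - 1)\<bar> \<le> 8" unfolding e2 using g by blast
qed

lemma al_q:
  assumes "m \<ge> 1"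
  shows "real m * ((al m)\<^sup>2 * pi) \<le> 1" and "2 \<le> (2 * real m + 1) * ((al m)\<^sup>2 * pi)"
proof -
  have "2 * real m * (al m)\<^sup>2 * pi \<le> 2 / pi * pi" using al_upper[of m] by (intro mult_right_mono) auto
  then show "real m * ((al m)\<^sup>2 * pi) \<le> 1" by (simp add: algebra_simps)
  have "2 / pi * pi \<le> (2 * real m + 1) * (al m)\<^sup>2 * pi" using al_lower[of m] by (intro mult_right_mono) auto
  then show "2 \<le> (2 * real m + 1) * ((al m)\<^sup>2 * pi)" by (simp add: algebra_simps)
qed

definition E0n :: "nat \<Rightarrow> real" where
  "E0n n = (hdf n 0)\<^sup>2 + (2 * real n + 1) * (hermite_fun n 0)\<^sup>2"

lemma hd0: "(hdf n 0)\<^sup>2 = 2 * (real n + 1) * (hermite_fun (Suc n) 0)\<^sup>2"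
  by (simp add: hdf_def power_mult_distrib sc_sq)

lemma sq_pi: "(c * (A / sqrt pi))\<^sup>2 * pi\<^sup>2 = c\<^sup>2 * (A\<^sup>2 * pi)"
proof -
  have "(sqrt pi)\<^sup>2 = pi" by simp
  then show ?thesis by (simp add: power_mult_distrib power_divide power2_eq_square field_simps)
qed

lemma E0n_sq:
  assumes "n \<ge> 1"
  shows "\<bar>(E0n n)\<^sup>2 * pi\<^sup>2 - 4 * (2 * real n + 1)\<bar> \<le> 8"
proof (cases "even n")
  case True
  then obtain m where n: "n = 2 * m" by (auto elim: evenE)
  have m1: "m \<ge> 1" using assms n by simp
  have "E0n n = (4 * real m + 1) * (al m / sqrt pi)"
    unfolding E0n_def hd0 n using hf0_odd[of m] hf0_even[of m] by simp
  then have "(E0n n)\<^sup>2 * pi\<^sup>2 = (4 * real m + 1)\<^sup>2 * ((al m)\<^sup>2 * pi)"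
    by (simp only: sq_pi)
  moreover have "4 * (2 * real n + 1) = 4 * (4 * real m + 1)" using n by simp
  ultimately show ?thesis using q_bounds(1)[OF _ al_q[OF m1]] m1 by simp
next
  case False
  then obtain m where n: "n = 2 * m + 1" by (metis oddE)
  have e: "Suc n = 2 * Suc m" using n by simp
  define A where "A = al (Suc m)"
  have h2: "(hermite_fun (2 * Suc m) 0)\<^sup>2 = A / sqrt pi" unfolding A_def by (rule hf0_even)
  have h1: "hermite_fun n 0 = 0" using hf0_odd[of m] n by simp
  have "E0n n = (4 * real (Suc m)) * (A / sqrt pi)"
    unfolding E0n_def hd0 e h1 h2 by (simp add: n)
  then have "(E0n n)\<^sup>2 * pi\<^sup>2 = (4 * real (Suc m))\<^sup>2 * (A\<^sup>2 * pi)"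
    by (simp only: sq_pi)
  also have "\<dots> = 16 * (real (Suc m))\<^sup>2 * ((al (Suc m))\<^sup>2 * pi)" unfolding A_def by (simp add: power2_eq_square algebra_simps)
  finally have "(E0n n)\<^sup>2 * pi\<^sup>2 = 16 * (real (Suc m))\<^sup>2 * ((al (Suc m))\<^sup>2 * pi)" .
  moreover have "4 * (2 * real n + 1) = 4 * (4 * real (Suc m) - 1)" using n by simp
  ultimately show ?thesis using q_bounds(2)[OF _ al_q[of "Suc m"]] by simp
qed

lemma E0n_bounds:
  fixes L :: real
  assumes n1: "n \<ge> 1" and LL: "L\<^sup>2 = 2 * real n + 1" and L4: "L \<ge> 4"
  shows "\<bar>E0n n - 2 / pi * L\<bar> \<le> 2 / L" and "E0n n \<le> 4/5 * L"
proof -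
  define \<mu> where "\<mu> = 2 / pi"
  define E where "E = E0n n"
  have mu: "0 < \<mu>" "\<mu> \<le> 2/3" unfolding \<mu>_def using pi_gt3 by (auto simp: field_simps)
  have E0: "E \<ge> 0" by (simp add: E_def E0n_def)
  have L0: "L > 0" using L4 by simp
  have s: "\<bar>E\<^sup>2 - \<mu>\<^sup>2 * L\<^sup>2\<bar> \<le> 2 * \<mu>\<^sup>2"
  proof -
    have pp: "pi\<^sup>2 > 0" by simp
    have "E\<^sup>2 - \<mu>\<^sup>2 * L\<^sup>2 = ((E0n n)\<^sup>2 * pi\<^sup>2 - 4 * (2 * real n + 1)) / pi\<^sup>2"
      unfolding E_def \<mu>_def LL using pp by (simp add: field_simps power2_eq_square)
    then have "\<bar>E\<^sup>2 - \<mu>\<^sup>2 * L\<^sup>2\<bar> = \<bar>(E0n n)\<^sup>2 * pi\<^sup>2 - 4 * (2 * real n + 1)\<bar> / pi\<^sup>2"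
      by (simp add: abs_divide)
    also have "\<dots> \<le> 8 / pi\<^sup>2" using E0n_sq[OF n1] pp by (intro divide_right_mono) auto
    also have "8 / pi\<^sup>2 = 2 * \<mu>\<^sup>2" unfolding \<mu>_def by (simp add: power_divide)
    finally show ?thesis .
  qed
  have pos: "E + \<mu> * L \<ge> \<mu> * L" "\<mu> * L > 0" using E0 mu L0 by auto
  have pr: "(E - \<mu> * L) * (E + \<mu> * L) = E\<^sup>2 - \<mu>\<^sup>2 * L\<^sup>2"
    by (simp add: algebra_simps power2_eq_square)
  have "\<bar>E - \<mu> * L\<bar> * (E + \<mu> * L) = \<bar>(E - \<mu> * L) * (E + \<mu> * L)\<bar>"
    using pos by (simp add: abs_mult)
  also have "\<dots> = \<bar>E\<^sup>2 - \<mu>\<^sup>2 * L\<^sup>2\<bar>" unfolding pr ..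
  also have "\<dots> \<le> 2 * \<mu>\<^sup>2" by (rule s)
  finally have a: "\<bar>E - \<mu> * L\<bar> * (E + \<mu> * L) \<le> 2 * \<mu>\<^sup>2" .
  have "\<bar>E - \<mu> * L\<bar> * (\<mu> * L) \<le> \<bar>E - \<mu> * L\<bar> * (E + \<mu> * L)"
    using pos by (intro mult_left_mono) auto
  with a have "\<bar>E - \<mu> * L\<bar> * (\<mu> * L) \<le> 2 * \<mu>\<^sup>2" by linarith
  then have b: "\<bar>E - \<mu> * L\<bar> \<le> 2 * \<mu> / L" using mu L0
    by (simp add: field_simps power2_eq_square)
  have "2 * \<mu> / L \<le> 2 / L" using mu L0 by (simp add: field_simps)
  then show "\<bar>E0n n - 2 / pi * L\<bar> \<le> 2 / L" using b unfolding E_def \<mu>_def by linarith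
  have c: "2 * \<mu> / L \<le> L / 12"
  proof -
    have "2 * \<mu> \<le> 16 / 12" using mu by simp
    also have "16 / 12 \<le> L * L / 12" using L4 mult_mono[OF L4 L4] by simp
    finally show ?thesis using L0 by (simp add: field_simps)
  qed
  have "\<mu> * L \<le> 2/3 * L" using mu L0 by (simp add: mult_right_mono)
  then show "E0n n \<le> 4/5 * L" using b c unfolding E_def by linarith
qed



lemma kernel_off:
  assumes "x \<noteq> y"
  shows "hermite_kernel n x y = hermite_fun n x * hermite_fun n y / 2
     + (hermite_fun n x * hdf n y - hdf n x * hermite_fun n y) / (2 * (x - y))"
proof -
  have s: "sc n * hermite_fun (Suc n) t = (t * hermite_fun n t - hdf n t) / 2" for t
    by (simp add: hdf_def)
  have "(x - y) * hermite_kernel n x y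
      = (sc n * hermite_fun (Suc n) x) * hermite_fun n y - hermite_fun n x * (sc n * hermite_fun (Suc n) y)"
    unfolding CD by (simp add: algebra_simps)
  also have "\<dots> = ((x - y) * hermite_fun n x * hermite_fun n y + (hermite_fun n x * hdf n y - hdf n x * hermite_fun n y)) / 2"
    unfolding s by (simp add: field_simps)
  finally have e: "(x - y) * hermite_kernel n x y = ((x - y) * hermite_fun n x * hermite_fun n y + (hermite_fun n x * hdf n y - hdf n x * hermite_fun n y)) / 2" .
  have xy: "x - y \<noteq> 0" using assms by simp
  have "hermite_kernel n x y = ((x - y) * hermite_fun n x * hermite_fun n y + (hermite_fun n x * hdf n y - hdf n x * hermite_fun n y)) / 2 / (x - y)"
    using e xy by (simp add: field_simps)
  also have "\<dots> = hermite_fun n x * hermite_fun n y / 2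
     + (hermite_fun n x * hdf n y - hdf n x * hermite_fun n y) / (2 * (x - y))"
    using xy by (simp add: field_simps)
  finally show ?thesis .
qed

lemma kernel_diag:
  "hermite_kernel n y y = ((hermite_fun n y)\<^sup>2 + ((hdf n y)\<^sup>2 + (2 * real n + 1 - y\<^sup>2) * (hermite_fun n y)\<^sup>2)) / 2"
proof -
  define K where "K t = hermite_kernel n t y" for t
  have eK: "K = (\<lambda>t. \<Sum>k\<le>n. hermite_fun k t * hermite_fun k y)"
    by (rule ext) (simp add: K_def hermite_kernel_def)
  have dK: "(K has_real_derivative (\<Sum>k\<le>n. hdf k y * hermite_fun k y)) (at y)"
    unfolding eK by (rule DERIV_sum) (rule DERIV_cmult_right[OF hf_deriv'])
  have dF1: "((\<lambda>t. (t - y) * K t) has_real_derivative K y) (at y)"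
    by (rule derivative_eq_intros dK refl | simp)+
  have eF: "(\<lambda>t. (t - y) * K t) = (\<lambda>t. sc n * (hermite_fun (Suc n) t * hermite_fun n y - hermite_fun n t * hermite_fun (Suc n) y))"
    by (rule ext) (simp add: K_def CD)
  have dF2: "((\<lambda>t. (t - y) * K t) has_real_derivative sc n * (hdf (Suc n) y * hermite_fun n y - hdf n y * hermite_fun (Suc n) y)) (at y)"
    unfolding eF by (rule derivative_eq_intros hf_deriv' refl | simp)+
  have Ky: "K y = sc n * (hdf (Suc n) y * hermite_fun n y - hdf n y * hermite_fun (Suc n) y)"
    by (rule DERIV_unique[OF dF1 dF2])
  define A where "A = hermite_fun n y"
  define B where "B = hermite_fun (Suc n) y"
  define C where "C = hermite_fun (Suc (Suc n)) y"
  define D where "D = hdf n y"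
  define s where "s = sc n"
  define s' where "s' = sc (Suc n)"
  have hD: "D = y * A - 2 * s * B" unfolding D_def A_def B_def s_def by (simp add: hdf_def)
  have hC: "s' * C = y * B - s * A" unfolding C_def A_def B_def s_def s'_def by (rule hf_rec)
  have hD1: "hdf (Suc n) y = y * B - 2 * (s' * C)" unfolding B_def C_def s'_def by (simp add: hdf_def)
  have ss: "s * s = (real n + 1) / 2" unfolding s_def using sc_sq[of n] by (simp add: power2_eq_square)
  have "K y = s * (hdf (Suc n) y * A - D * B)" unfolding Ky s_def A_def B_def D_def ..
  also have "\<dots> = s * ((y * B - 2 * (y * B - s * A)) * A - (y * A - 2 * s * B) * B)"
    unfolding hD1 hC hD ..
  also have "\<dots> = 2 * (s * s) * A\<^sup>2 + 2 * (s * s) * B\<^sup>2 - 2 * s * y * A * B"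
    by (simp add: algebra_simps power2_eq_square)
  also have "\<dots> = (A\<^sup>2 + (D\<^sup>2 + (2 * real n + 1 - y\<^sup>2) * A\<^sup>2)) / 2 + (2 * (s * s) - (real n + 1)) * A\<^sup>2"
    unfolding hD by (simp add: field_simps power2_eq_square)
  also have "\<dots> = (A\<^sup>2 + (D\<^sup>2 + (2 * real n + 1 - y\<^sup>2) * A\<^sup>2)) / 2"
    unfolding ss by (simp add: field_simps)
  finally show ?thesis unfolding K_def A_def D_def .
qed



theorem mainTheorem5:
  fixes T :: real and n :: nat and x y :: real
  assumes "T \<ge> 2"
    and "real n \<ge> 2 * T\<^sup>2"
    and "x \<in> {-T..T}" and "y \<in> {-T..T}"
  shows "\<bar>hermite_kernel n x y
            - sine_kernel ((sqrt (2 * real n + 1) + sqrt (2 * real n + 3)) / 2) x y\<bar>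
         \<le> 17 * T\<^sup>2 / sqrt (2 * real n + 1)"
proof -
  define L where "L = sqrt (2 * real n + 1)"
  define S where "S = sqrt (2 * real n + 3)"
  define N where "N = (L + S) / 2"
  have T2: "T \<ge> 2" using assms(1) .
  have T4: "4 \<le> T\<^sup>2"
  proof -
    have "2 * 2 \<le> T * T" using T2 by (intro mult_mono) auto
    then show ?thesis by (simp add: power2_eq_square)
  qed
  have n8: "real n \<ge> 8" using assms(2) T4 by linarith
  have n1: "n \<ge> 1" using n8 by simp
  have LL: "L\<^sup>2 = 2 * real n + 1" unfolding L_def by simp
  have SS: "S\<^sup>2 = 2 * real n + 3" unfolding S_def by simp
  have L4: "L \<ge> 4"
  proof -
    have "sqrt 16 \<le> L" unfolding L_def using n8 by (intro real_sqrt_le_mono) simp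
    then show ?thesis by simp
  qed
  have L0: "L > 0" using L4 by simp
  have TL: "4 * T\<^sup>2 \<le> L\<^sup>2" unfolding LL using assms(2) by simp
  have x: "\<bar>x\<bar> \<le> T" and y: "\<bar>y\<bar> \<le> T" using assms(3,4) by auto
  have SL: "L \<le> S" unfolding L_def S_def by (intro real_sqrt_le_mono) simp
  have NL1: "0 \<le> N - L" using SL unfolding N_def by simp
  have NL2: "N - L \<le> 1 / (2 * L)"
  proof -
    have "(S - L) * (S + L) = 2" using LL SS by (simp add: algebra_simps power2_eq_square)
    moreover have "2 * L \<le> S + L" using SL by simp
    ultimately have "(S - L) * (2 * L) \<le> 2" using SL
      by (metis diff_ge_0_iff_ge mult_left_mono)
    then have "S - L \<le> 1 / L" using L0 by (simp add: field_simps)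
    then show ?thesis unfolding N_def using L0 by (simp add: field_simps)
  qed
  have df: "\<And>t. (hermite_fun n has_real_derivative hdf n t) (at t)" by (rule hf_deriv')
  have dg: "\<And>t. (hdf n has_real_derivative (t\<^sup>2 - L\<^sup>2) * hermite_fun n t) (at t)"
    unfolding LL using hdf_deriv by simp
  have E0: "Ef (hermite_fun n) (hdf n) L 0 = E0n n" unfolding Ef_def E0n_def LL by simp
  have E0a: "\<bar>Ef (hermite_fun n) (hdf n) L 0 - 2 / pi * L\<bar> \<le> 2 / L"
    unfolding E0 by (rule E0n_bounds(1)[OF n1 LL L4])
  have E0b: "Ef (hermite_fun n) (hdf n) L 0 \<le> 4/5 * L"
    unfolding E0 by (rule E0n_bounds(2)[OF n1 LL L4])
  have goal: "\<bar>hermite_kernel n x y - sine_kernel N x y\<bar> \<le> 17 * T\<^sup>2 / L"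
  proof (cases "x = y")
    case True
    have k: "hermite_kernel n y y = ((hermite_fun n y)\<^sup>2 + Ef (hermite_fun n) (hdf n) L y) / 2"
      unfolding kernel_diag Ef_def LL ..
    show ?thesis unfolding True k sine_kernel_def
      using main_diag[where f="hermite_fun n" and g="hdf n" and L=L, OF df dg L4 T2 TL y E0a E0b NL1 NL2]
      by simp
  next
    case False
    show ?thesis unfolding kernel_off[OF False] sine_kernel_def
      using main_off[where f="hermite_fun n" and g="hdf n" and L=L, OF df dg L4 T2 TL x y False E0a E0b NL1 NL2]
        False by simp
  qed
  then show ?thesis unfolding N_def L_def S_def .
qed

end
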